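(* Let $(\Omega,+)$ be a group and $(a,b)$ a pair of subgroups. Then: (1) the set $a^\top\cap{}^\top b=\{x: a\top x,\ x\top b\}$ is stable under $(x,y,z)\mapsto\Gamma(x,a,y,b,z)$, and with the induced law it is a torsor, denoted $U_{ab}$; (2) the set $b^\top\cap{}^\top a=\{x: b\top x,\ x\top a\}$ is stable under $(x,y,z)\mapsto\check\Gamma(x,a,y,b,z)$, and with the induced law it is a torsor, denoted $\check U_{ab}$; (3) $\check U_{ba}=U_{ab}^{opp}$, i.e. $\check U_{ba}$ (the set $a^\top\cap{}^\top b$ with law $\check\Gamma(x,b,y,a,z)$) coincides with the set $a^\top\cap{}^\top b$ with the opposite law $(x,y,z)\mapsto\Gamma(z,a,y,b,x)$.
   Context: $(\Omega,+)$ is a group written additively but not necessarily abelian. For subsets $x,y$, $x\top y$ means every $\omega$ has a unique decomposition $\omega=\xi+\eta$ with $\xi\in x,\eta\in y$. $\Gamma(x,a,y,b,z)=\{\omega:\exists\alpha\in a,\beta\in b:\ \alpha+\omega+\beta\in y,\ \alpha+\omega\in z,\ \omega+\beta\in x\}$; $\check\Gamma(x,a,y,b,z)=\{\omega:\exists\alpha\in a,\beta\in b:\ \beta+\omega+\alpha\in y,\ \omega+\alpha\in z,\ \beta+\omega\in x\}$. A torsor is a set with a ternary map $(xyz)$ satisfying $(xy(zuv))=(x(uzy)v)=((xyz)uv)$ and $(xxy)=y=(yxx)$. *)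

theory Defs
  imports Main
begin

text \<open>The group (Omega,+) is the ambient type of class group_add (additive, not
necessarily abelian).\<close>

definition is_subgroup :: "'a::group_add set \<Rightarrow> bool" where
  "is_subgroup H \<longleftrightarrow> 0 \<in> H \<and> (\<forall>x\<in>H. \<forall>y\<in>H. x + y \<in> H) \<and> (\<forall>x\<in>H. - x \<in> H)"

definition transv :: "'a::group_add set \<Rightarrow> 'a set \<Rightarrow> bool" where
  "transv x y \<longleftrightarrow> (\<forall>\<omega>. \<exists>!p. fst p \<in> x \<and> snd p \<in> y \<and> \<omega> = fst p + snd p)"

definition Gamma :: "'a::group_add set \<Rightarrow> 'a set \<Rightarrow> 'a set \<Rightarrow> 'a set \<Rightarrow> 'a set \<Rightarrow> 'a set" where
  "Gamma x a y b z = {\<omega>. \<exists>\<alpha>\<in>a. \<exists>\<beta>\<in>b. \<alpha> + \<omega> + \<beta> \<in> y \<and> \<alpha> + \<omega> \<in> z \<and> \<omega> + \<beta> \<in> x}"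

definition Gammac :: "'a::group_add set \<Rightarrow> 'a set \<Rightarrow> 'a set \<Rightarrow> 'a set \<Rightarrow> 'a set \<Rightarrow> 'a set" where
  "Gammac x a y b z = {\<omega>. \<exists>\<alpha>\<in>a. \<exists>\<beta>\<in>b. \<beta> + \<omega> + \<alpha> \<in> y \<and> \<omega> + \<alpha> \<in> z \<and> \<beta> + \<omega> \<in> x}"

definition is_torsor :: "'b set \<Rightarrow> ('b \<Rightarrow> 'b \<Rightarrow> 'b \<Rightarrow> 'b) \<Rightarrow> bool" where
  "is_torsor S m \<longleftrightarrow>
     (\<forall>x\<in>S. \<forall>y\<in>S. \<forall>z\<in>S. m x y z \<in> S) \<and>
     (\<forall>x\<in>S. \<forall>y\<in>S. \<forall>z\<in>S. \<forall>u\<in>S. \<forall>v\<in>S.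
        m x y (m z u v) = m x (m u z y) v \<and> m x (m u z y) v = m (m x y z) u v) \<and>
     (\<forall>x\<in>S. \<forall>y\<in>S. m x x y = y \<and> m y x x = y)"

definition U_carrier :: "'a::group_add set \<Rightarrow> 'a set \<Rightarrow> 'a set set" where
  "U_carrier a b = {x. transv a x \<and> transv x b}"

definition Uc_carrier :: "'a::group_add set \<Rightarrow> 'a set \<Rightarrow> 'a set set" where
  "Uc_carrier a b = {x. transv b x \<and> transv x a}"

end

theory Submission
  imports Defs
begin

definition sA :: "'a::group_add set \<Rightarrow> 'a set \<Rightarrow> 'a \<Rightarrow> 'a" where
  "sA a x w = (THE \<alpha>. \<alpha> \<in> a \<and> \<alpha> + w \<in> x)"

definition tB :: "'a::group_add set \<Rightarrow> 'a set \<Rightarrow> 'a \<Rightarrow> 'a" where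
  "tB x b w = (THE \<beta>. \<beta> \<in> b \<and> w + \<beta> \<in> x)"

lemma dac: "p - q + (q + w) = (p::'a::group_add) + w"
  by (metis add.assoc diff_add_cancel)

lemma transv_left:
  assumes sa: "is_subgroup a"
  shows "transv a x \<longleftrightarrow> (\<forall>w. \<exists>!\<alpha>. \<alpha> \<in> a \<and> \<alpha> + w \<in> x)"
proof
  assume T: "transv a x"
  show "\<forall>w. \<exists>!\<alpha>. \<alpha> \<in> a \<and> \<alpha> + w \<in> x"
  proof
    fix w
    obtain p where p: "fst p \<in> a" "snd p \<in> x" "w = fst p + snd p"
      and u: "\<And>q. fst q \<in> a \<and> snd q \<in> x \<and> w = fst q + snd q \<Longrightarrow> q = p"
      using T unfolding transv_def by metis
    show "\<exists>!\<alpha>. \<alpha> \<in> a \<and> \<alpha> + w \<in> x"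
    proof (rule ex1I[of _ "- fst p"])
      show "- fst p \<in> a \<and> - fst p + w \<in> x" using p sa
        by (simp add: is_subgroup_def add.assoc[symmetric])
    next
      fix \<alpha> assume h: "\<alpha> \<in> a \<and> \<alpha> + w \<in> x"
      have "(- \<alpha>, \<alpha> + w) = p"
        by (rule u) (use h sa in \<open>simp add: is_subgroup_def add.assoc[symmetric]\<close>)
      then show "\<alpha> = - fst p" by auto
    qed
  qed
next
  assume U: "\<forall>w. \<exists>!\<alpha>. \<alpha> \<in> a \<and> \<alpha> + w \<in> x"
  show "transv a x" unfolding transv_def
  proof
    fix w
    obtain \<alpha> where al: "\<alpha> \<in> a" "\<alpha> + w \<in> x" and u: "\<And>\<gamma>. \<gamma> \<in> a \<and> \<gamma> + w \<in> x \<Longrightarrow> \<gamma> = \<alpha>"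
      using U by metis
    show "\<exists>!p. fst p \<in> a \<and> snd p \<in> x \<and> w = fst p + snd p"
    proof (rule ex1I[of _ "(- \<alpha>, \<alpha> + w)"])
      show "fst (- \<alpha>, \<alpha> + w) \<in> a \<and> snd (- \<alpha>, \<alpha> + w) \<in> x \<and> w = fst (- \<alpha>, \<alpha> + w) + snd (- \<alpha>, \<alpha> + w)"
        using al sa by (simp add: is_subgroup_def add.assoc[symmetric])
    next
      fix q assume h: "fst q \<in> a \<and> snd q \<in> x \<and> w = fst q + snd q"
      have "- fst q + w = snd q" using h by (simp add: add.assoc[symmetric])
      then have "- fst q = \<alpha>" using u[of "- fst q"] h sa by (simp add: is_subgroup_def)
      then show "q = (- \<alpha>, \<alpha> + w)" using h
        by (metis \<open>- fst q + w = snd q\<close> minus_minus prod.collapse)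
    qed
  qed
qed

lemma transv_right:
  assumes sb: "is_subgroup b"
  shows "transv x b \<longleftrightarrow> (\<forall>w. \<exists>!\<beta>. \<beta> \<in> b \<and> w + \<beta> \<in> x)"
proof
  assume T: "transv x b"
  show "\<forall>w. \<exists>!\<beta>. \<beta> \<in> b \<and> w + \<beta> \<in> x"
  proof
    fix w
    obtain p where p: "fst p \<in> x" "snd p \<in> b" "w = fst p + snd p"
      and u: "\<And>q. fst q \<in> x \<and> snd q \<in> b \<and> w = fst q + snd q \<Longrightarrow> q = p"
      using T unfolding transv_def by metis
    show "\<exists>!\<beta>. \<beta> \<in> b \<and> w + \<beta> \<in> x"
    proof (rule ex1I[of _ "- snd p"])
      show "- snd p \<in> b \<and> w + - snd p \<in> x" using p sb
        by (simp add: is_subgroup_def add.assoc)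
    next
      fix \<beta> assume h: "\<beta> \<in> b \<and> w + \<beta> \<in> x"
      have "(w + \<beta>, - \<beta>) = p"
        by (rule u) (use h sb in \<open>simp add: is_subgroup_def add.assoc\<close>)
      then show "\<beta> = - snd p" by auto
    qed
  qed
next
  assume U: "\<forall>w. \<exists>!\<beta>. \<beta> \<in> b \<and> w + \<beta> \<in> x"
  show "transv x b" unfolding transv_def
  proof
    fix w
    obtain \<beta> where al: "\<beta> \<in> b" "w + \<beta> \<in> x" and u: "\<And>\<gamma>. \<gamma> \<in> b \<and> w + \<gamma> \<in> x \<Longrightarrow> \<gamma> = \<beta>"
      using U by metis
    show "\<exists>!p. fst p \<in> x \<and> snd p \<in> b \<and> w = fst p + snd p"
    proof (rule ex1I[of _ "(w + \<beta>, - \<beta>)"])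
      show "fst (w + \<beta>, - \<beta>) \<in> x \<and> snd (w + \<beta>, - \<beta>) \<in> b \<and> w = fst (w + \<beta>, - \<beta>) + snd (w + \<beta>, - \<beta>)"
        using al sb by (simp add: is_subgroup_def add.assoc)
    next
      fix q assume h: "fst q \<in> x \<and> snd q \<in> b \<and> w = fst q + snd q"
      have e: "w + - snd q = fst q" using h by (simp add: add.assoc)
      then have "- snd q = \<beta>" using u[of "- snd q"] h sb by (simp add: is_subgroup_def)
      then show "q = (w + \<beta>, - \<beta>)" using e
        by (metis minus_minus prod.collapse)
    qed
  qed
qed

context
  fixes a b :: "'a::group_add set"
  assumes sa: "is_subgroup a" and sb: "is_subgroup b"
begin

lemma a0: "0 \<in> a" and aadd: "x \<in> a \<Longrightarrow> y \<in> a \<Longrightarrow> x + y \<in> a" and aneg: "x \<in> a \<Longrightarrow> - x \<in> a"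
  using sa by (auto simp: is_subgroup_def)

lemma b0: "0 \<in> b" and badd: "x \<in> b \<Longrightarrow> y \<in> b \<Longrightarrow> x + y \<in> b" and bneg: "x \<in> b \<Longrightarrow> - x \<in> b"
  using sb by (auto simp: is_subgroup_def)

lemma aminus: "x \<in> a \<Longrightarrow> y \<in> a \<Longrightarrow> x - y \<in> a"
  using aadd aneg by (metis diff_conv_add_uminus)

lemma sA_props:
  assumes "transv a x"
  shows "sA a x w \<in> a" "sA a x w + w \<in> x"
    "\<alpha> \<in> a \<Longrightarrow> \<alpha> + w \<in> x \<Longrightarrow> \<alpha> = sA a x w"
proof -
  have E: "\<exists>!\<alpha>. \<alpha> \<in> a \<and> \<alpha> + w \<in> x" using assms transv_left[OF sa] by blast
  from theI'[OF E] show "sA a x w \<in> a" "sA a x w + w \<in> x" unfolding sA_def by auto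
  show "\<alpha> \<in> a \<Longrightarrow> \<alpha> + w \<in> x \<Longrightarrow> \<alpha> = sA a x w"
    unfolding sA_def using the1_equality[OF E] by auto
qed

lemma tB_props:
  assumes "transv x b"
  shows "tB x b w \<in> b" "w + tB x b w \<in> x"
    "\<beta> \<in> b \<Longrightarrow> w + \<beta> \<in> x \<Longrightarrow> \<beta> = tB x b w"
proof -
  have E: "\<exists>!\<beta>. \<beta> \<in> b \<and> w + \<beta> \<in> x" using assms transv_right[OF sb] by blast
  from theI'[OF E] show "tB x b w \<in> b" "w + tB x b w \<in> x" unfolding tB_def by auto
  show "\<beta> \<in> b \<Longrightarrow> w + \<beta> \<in> x \<Longrightarrow> \<beta> = tB x b w"
    unfolding tB_def using the1_equality[OF E] by auto
qed

lemma sA_shift: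
  assumes "transv a x" "\<alpha> \<in> a"
  shows "sA a x (\<alpha> + w) = sA a x w - \<alpha>"
proof -
  have e: "sA a x w - \<alpha> + (\<alpha> + w) = sA a x w + w"
    by (simp add: add.assoc[symmetric])
  have m: "sA a x w - \<alpha> \<in> a" using aminus sA_props(1)[OF assms(1)] assms(2) by blast
  have "sA a x w - \<alpha> + (\<alpha> + w) \<in> x" unfolding e by (rule sA_props(2)[OF assms(1)])
  from sA_props(3)[OF assms(1) m this] show ?thesis by simp
qed

lemma tB_shift:
  assumes "transv x b" "\<beta> \<in> b"
  shows "tB x b (w + \<beta>) = - \<beta> + tB x b w"
proof -
  have e: "w + \<beta> + (- \<beta> + tB x b w) = w + tB x b w"
    by (simp add: add.assoc)
  have m: "- \<beta> + tB x b w \<in> b" using badd bneg tB_props(1)[OF assms(1)] assms(2) by blast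
  have "w + \<beta> + (- \<beta> + tB x b w) \<in> x" unfolding e by (rule tB_props(2)[OF assms(1)])
  from tB_props(3)[OF assms(1) m this] show ?thesis by simp
qed

lemma sA_mem:
  assumes "transv a x" shows "w \<in> x \<longleftrightarrow> sA a x w = 0"
proof
  assume "w \<in> x" then show "sA a x w = 0" using sA_props(3)[OF assms a0, of w] by simp
next
  assume "sA a x w = 0" then show "w \<in> x" using sA_props(2)[OF assms, of w] by simp
qed

lemma tB_mem:
  assumes "transv x b" shows "w \<in> x \<longleftrightarrow> tB x b w = 0"
proof
  assume "w \<in> x" then show "tB x b w = 0" using tB_props(3)[OF assms b0, of w] by simp
next
  assume "tB x b w = 0" then show "w \<in> x" using tB_props(2)[OF assms, of w] by simp
qed

lemma Gamma0:
  assumes "transv a z" "transv x b"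
  shows "w \<in> Gamma x a y b z \<longleftrightarrow> sA a z w + w + tB x b w \<in> y"
proof
  assume "w \<in> Gamma x a y b z"
  then obtain \<alpha> \<beta> where h: "\<alpha> \<in> a" "\<beta> \<in> b" "\<alpha> + w + \<beta> \<in> y" "\<alpha> + w \<in> z" "w + \<beta> \<in> x"
    unfolding Gamma_def by blast
  have "\<alpha> = sA a z w" using sA_props(3)[OF assms(1) h(1,4)] .
  moreover have "\<beta> = tB x b w" using tB_props(3)[OF assms(2) h(2,5)] .
  ultimately show "sA a z w + w + tB x b w \<in> y" using h(3) by simp
next
  assume h: "sA a z w + w + tB x b w \<in> y"
  have "sA a z w \<in> a" "tB x b w \<in> b" "sA a z w + w \<in> z" "w + tB x b w \<in> x"
    using sA_props[OF assms(1)] tB_props[OF assms(2)] by auto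
  then show "w \<in> Gamma x a y b z" unfolding Gamma_def using h by blast
qed

lemma Gstar:
  assumes "transv a z" "transv x b" "transv a x" "transv y b"
  shows "w \<in> Gamma x a y b z \<longleftrightarrow> sA a x (w + tB y b (sA a z w + w)) = 0"
proof -
  define c where "c = sA a z w + w"
  have "w \<in> Gamma x a y b z \<longleftrightarrow> c + tB x b w \<in> y" using Gamma0[OF assms(1,2)] c_def by simp
  also have "\<dots> \<longleftrightarrow> tB y b c = tB x b w"
  proof
    assume "c + tB x b w \<in> y"
    from tB_props(3)[OF assms(4) tB_props(1)[OF assms(2)] this] show "tB y b c = tB x b w" by simp
  next
    assume e: "tB y b c = tB x b w"
    show "c + tB x b w \<in> y" using tB_props(2)[OF assms(4), of c] unfolding e .
  qed
  also have "\<dots> \<longleftrightarrow> w + tB y b c \<in> x"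
  proof
    assume e: "tB y b c = tB x b w"
    show "w + tB y b c \<in> x" using tB_props(2)[OF assms(2), of w] unfolding e .
  next
    assume "w + tB y b c \<in> x"
    from tB_props(3)[OF assms(2) tB_props(1)[OF assms(4)] this] show "tB y b c = tB x b w" by simp
  qed
  also have "\<dots> \<longleftrightarrow> sA a x (w + tB y b c) = 0" using sA_mem[OF assms(3)] by simp
  finally show ?thesis unfolding c_def .
qed

lemma Gstar2:
  assumes "transv a z" "transv x b" "transv a y" "transv z b"
  shows "w \<in> Gamma x a y b z \<longleftrightarrow> tB z b (sA a y (w + tB x b w) + w) = 0"
proof -
  define r where "r = w + tB x b w"
  have "w \<in> Gamma x a y b z \<longleftrightarrow> sA a z w + r \<in> y" using Gamma0[OF assms(1,2)] r_def
    by (simp add: add.assoc)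
  also have "\<dots> \<longleftrightarrow> sA a y r = sA a z w"
  proof
    assume "sA a z w + r \<in> y"
    from sA_props(3)[OF assms(3) sA_props(1)[OF assms(1)] this] show "sA a y r = sA a z w" by simp
  next
    assume e: "sA a y r = sA a z w"
    show "sA a z w + r \<in> y" using sA_props(2)[OF assms(3), of r] unfolding e .
  qed
  also have "\<dots> \<longleftrightarrow> sA a y r + w \<in> z"
  proof
    assume e: "sA a y r = sA a z w"
    show "sA a y r + w \<in> z" using sA_props(2)[OF assms(1), of w] unfolding e .
  next
    assume "sA a y r + w \<in> z"
    from sA_props(3)[OF assms(1) sA_props(1)[OF assms(3)] this] show "sA a y r = sA a z w" by simp
  qed
  also have "\<dots> \<longleftrightarrow> tB z b (sA a y r + w) = 0" using tB_mem[OF assms(4)] by simp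
  finally show ?thesis unfolding r_def .
qed

lemma GL:
  assumes T: "transv a x" "transv y b" "transv a z" "transv x b" and al: "\<alpha> \<in> a"
  shows "\<alpha> + w \<in> Gamma x a y b z \<longleftrightarrow> \<alpha> = sA a x (w + tB y b (sA a z w + w))"
proof -
  define s where "s = sA a x (w + tB y b (sA a z w + w))"
  have "sA a z (\<alpha> + w) + (\<alpha> + w) = sA a z w + w"
    using sA_shift[OF T(3) al] by (simp add: add.assoc[symmetric])
  then have "\<alpha> + w \<in> Gamma x a y b z \<longleftrightarrow> sA a x (\<alpha> + (w + tB y b (sA a z w + w))) = 0"
    using Gstar[OF T(3,4,1,2)] by (simp add: add.assoc)
  also have "\<dots> \<longleftrightarrow> s - \<alpha> = 0" using sA_shift[OF T(1) al] s_def by simp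
  finally show ?thesis unfolding s_def by auto
qed

lemma GR:
  assumes T: "transv a z" "transv x b" "transv a y" "transv z b" and be: "\<beta> \<in> b"
  shows "w + \<beta> \<in> Gamma x a y b z \<longleftrightarrow> \<beta> = tB z b (sA a y (w + tB x b w) + w)"
proof -
  define t where "t = tB z b (sA a y (w + tB x b w) + w)"
  have "w + \<beta> + tB x b (w + \<beta>) = w + tB x b w"
    using tB_shift[OF T(2) be] by (simp add: add.assoc)
  then have "w + \<beta> \<in> Gamma x a y b z \<longleftrightarrow> tB z b ((sA a y (w + tB x b w) + w) + \<beta>) = 0"
    using Gstar2[OF T] by (simp add: add.assoc)
  also have "\<dots> \<longleftrightarrow> - \<beta> + t = 0" using tB_shift[OF T(4) be] t_def by simp
  finally show ?thesis unfolding t_def by (metis add.left_inverse add_left_cancel minus_unique)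
qed

lemma GammaU:
  assumes "x \<in> U_carrier a b" "y \<in> U_carrier a b" "z \<in> U_carrier a b"
  shows "Gamma x a y b z \<in> U_carrier a b"
proof -
  have T: "transv a x" "transv x b" "transv a y" "transv y b" "transv a z" "transv z b"
    using assms by (auto simp: U_carrier_def)
  have L: "transv a (Gamma x a y b z)" unfolding transv_left[OF sa]
  proof
    fix w
    have m: "sA a x (w + tB y b (sA a z w + w)) \<in> a" using sA_props(1)[OF T(1)] .
    show "\<exists>!\<alpha>. \<alpha> \<in> a \<and> \<alpha> + w \<in> Gamma x a y b z"
      apply (rule ex1I[of _ "sA a x (w + tB y b (sA a z w + w))"])
      using GL[OF T(1,4,5,2), of _ w] m by auto
  qed
  have R: "transv (Gamma x a y b z) b" unfolding transv_right[OF sb]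
  proof
    fix w
    have m: "tB z b (sA a y (w + tB x b w) + w) \<in> b" using tB_props(1)[OF T(6)] .
    show "\<exists>!\<beta>. \<beta> \<in> b \<and> w + \<beta> \<in> Gamma x a y b z"
      apply (rule ex1I[of _ "tB z b (sA a y (w + tB x b w) + w)"])
      using GR[OF T(5,2,3,6), of _ w] m by auto
  qed
  show ?thesis using L R by (simp add: U_carrier_def)
qed

lemma sA_Gamma:
  assumes "x \<in> U_carrier a b" "y \<in> U_carrier a b" "z \<in> U_carrier a b"
  shows "sA a (Gamma x a y b z) w = sA a x (w + tB y b (sA a z w + w))"
proof -
  have T: "transv a x" "transv x b" "transv a y" "transv y b" "transv a z" "transv z b"
    using assms by (auto simp: U_carrier_def)
  have TG: "transv a (Gamma x a y b z)" using GammaU[OF assms] by (simp add: U_carrier_def)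
  have m: "sA a x (w + tB y b (sA a z w + w)) \<in> a" using sA_props(1)[OF T(1)] .
  have "sA a x (w + tB y b (sA a z w + w)) + w \<in> Gamma x a y b z" using GL[OF T(1,4,5,2) m] by simp
  from sA_props(3)[OF TG m this] show ?thesis by simp
qed

lemma tB_Gamma:
  assumes "x \<in> U_carrier a b" "y \<in> U_carrier a b" "z \<in> U_carrier a b"
  shows "tB (Gamma x a y b z) b w = tB z b (sA a y (w + tB x b w) + w)"
proof -
  have T: "transv a x" "transv x b" "transv a y" "transv y b" "transv a z" "transv z b"
    using assms by (auto simp: U_carrier_def)
  have TG: "transv (Gamma x a y b z) b" using GammaU[OF assms] by (simp add: U_carrier_def)
  have m: "tB z b (sA a y (w + tB x b w) + w) \<in> b" using tB_props(1)[OF T(6)] .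
  have "w + tB z b (sA a y (w + tB x b w) + w) \<in> Gamma x a y b z" using GR[OF T(5,2,3,6) m] by simp
  from tB_props(3)[OF TG m this] show ?thesis by simp
qed

lemma assoc1:
  assumes U: "x \<in> U_carrier a b" "y \<in> U_carrier a b" "z \<in> U_carrier a b"
     "u \<in> U_carrier a b" "v \<in> U_carrier a b"
  shows "Gamma x a y b (Gamma z a u b v) = Gamma x a (Gamma u a z b y) b v"
proof (rule set_eqI)
  fix w
  define W where "W = Gamma z a u b v"
  define V where "V = Gamma u a z b y"
  have WU: "W \<in> U_carrier a b" "V \<in> U_carrier a b" unfolding W_def V_def using GammaU U by auto
  have T: "transv a x" "transv x b" "transv a y" "transv y b" "transv a z" "transv z b"
     "transv a u" "transv u b" "transv a v" "transv v b"
     "transv a W" "transv W b" "transv a V" "transv V b"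
    using U WU by (auto simp: U_carrier_def)
  define \<eta> where "\<eta> = sA a v w + w"
  have "tB V b \<eta> = tB y b (sA a z (\<eta> + tB u b \<eta>) + \<eta>)"
    unfolding V_def by (rule tB_Gamma[OF U(4,3,2)])
  also have "sA a z (\<eta> + tB u b \<eta>) = sA a z (w + tB u b \<eta>) - sA a v w"
    unfolding \<eta>_def using sA_shift[OF T(5) sA_props(1)[OF T(9), of w], of "w + tB u b (sA a v w + w)"]
    by (simp add: add.assoc)
  also have "sA a z (w + tB u b \<eta>) = sA a W w"
    unfolding W_def \<eta>_def using sA_Gamma[OF U(3,4,5)] by simp
  finally have e: "tB V b \<eta> = tB y b (sA a W w + w)"
    unfolding \<eta>_def by (simp only: dac)
  have "w \<in> Gamma x a y b W \<longleftrightarrow> sA a x (w + tB y b (sA a W w + w)) = 0"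
    using Gstar[OF T(11,2,1,4)] .
  also have "\<dots> \<longleftrightarrow> sA a x (w + tB V b \<eta>) = 0" using e by simp
  also have "\<dots> \<longleftrightarrow> w \<in> Gamma x a V b v"
    using Gstar[OF T(9,2,1,14)] \<eta>_def by simp
  finally show "w \<in> Gamma x a y b (Gamma z a u b v) \<longleftrightarrow> w \<in> Gamma x a (Gamma u a z b y) b v"
    unfolding W_def V_def .
qed

lemma assoc2:
  assumes U: "x \<in> U_carrier a b" "y \<in> U_carrier a b" "z \<in> U_carrier a b"
     "u \<in> U_carrier a b" "v \<in> U_carrier a b"
  shows "Gamma x a (Gamma u a z b y) b v = Gamma (Gamma x a y b z) a u b v"
proof (rule set_eqI)
  fix w
  define X where "X = Gamma x a y b z"
  define V where "V = Gamma u a z b y"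
  have WU: "X \<in> U_carrier a b" "V \<in> U_carrier a b" unfolding X_def V_def using GammaU U by auto
  have T: "transv a x" "transv x b" "transv a y" "transv y b" "transv a z" "transv z b"
     "transv a u" "transv u b" "transv a v" "transv v b"
     "transv a X" "transv X b" "transv a V" "transv V b"
    using U WU by (auto simp: U_carrier_def)
  define \<mu> where "\<mu> = w + tB x b w"
  have "sA a V \<mu> = sA a u (\<mu> + tB z b (sA a y \<mu> + \<mu>))"
    unfolding V_def by (rule sA_Gamma[OF U(4,3,2)])
  also have "tB z b (sA a y \<mu> + \<mu>) = - tB x b w + tB z b (sA a y \<mu> + w)"
    unfolding \<mu>_def using tB_shift[OF T(6) tB_props(1)[OF T(2), of w], of "sA a y (w + tB x b w) + w"]
    by (simp add: add.assoc)
  also have "tB z b (sA a y \<mu> + w) = tB X b w"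
    unfolding X_def \<mu>_def using tB_Gamma[OF U(1,2,3)] by simp
  finally have e: "sA a V \<mu> = sA a u (w + tB X b w)"
    unfolding \<mu>_def by (simp add: add.assoc)
  have "w \<in> Gamma x a V b v \<longleftrightarrow> tB v b (sA a V (w + tB x b w) + w) = 0"
    using Gstar2[OF T(9,2,13,10)] .
  also have "\<dots> \<longleftrightarrow> tB v b (sA a u (w + tB X b w) + w) = 0" using e \<mu>_def by simp
  also have "\<dots> \<longleftrightarrow> w \<in> Gamma X a u b v"
    using Gstar2[OF T(9,12,7,10)] by simp
  finally show "w \<in> Gamma x a (Gamma u a z b y) b v \<longleftrightarrow> w \<in> Gamma (Gamma x a y b z) a u b v"
    unfolding X_def V_def .
qed

lemma idem1:
  assumes U: "x \<in> U_carrier a b" "y \<in> U_carrier a b"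
  shows "Gamma x a x b y = y"
proof (rule set_eqI)
  fix w
  have T: "transv a x" "transv x b" "transv a y" "transv y b"
    using U by (auto simp: U_carrier_def)
  have "w \<in> Gamma x a x b y \<longleftrightarrow> sA a y w + (w + tB x b w) \<in> x"
    using Gamma0[OF T(3,2)] by (simp add: add.assoc)
  also have "\<dots> \<longleftrightarrow> w \<in> y"
  proof
    assume h: "sA a y w + (w + tB x b w) \<in> x"
    have "sA a y w = sA a x (w + tB x b w)" using sA_props(3)[OF T(1) sA_props(1)[OF T(3)] h] .
    also have "\<dots> = 0" using sA_mem[OF T(1)] tB_props(2)[OF T(2)] by blast
    finally show "w \<in> y" using sA_mem[OF T(3)] by blast
  next
    assume "w \<in> y"
    then have "sA a y w = 0" using sA_mem[OF T(3)] by blast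
    then show "sA a y w + (w + tB x b w) \<in> x" using tB_props(2)[OF T(2)] by simp
  qed
  finally show "w \<in> Gamma x a x b y \<longleftrightarrow> w \<in> y" .
qed

lemma idem2:
  assumes U: "x \<in> U_carrier a b" "y \<in> U_carrier a b"
  shows "Gamma y a x b x = y"
proof (rule set_eqI)
  fix w
  have T: "transv a x" "transv x b" "transv a y" "transv y b"
    using U by (auto simp: U_carrier_def)
  have "w \<in> Gamma y a x b x \<longleftrightarrow> (sA a x w + w) + tB y b w \<in> x"
    using Gamma0[OF T(1,4)] by simp
  also have "\<dots> \<longleftrightarrow> w \<in> y"
  proof
    assume h: "(sA a x w + w) + tB y b w \<in> x"
    have "tB y b w = tB x b (sA a x w + w)" using tB_props(3)[OF T(2) tB_props(1)[OF T(4)] h] .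
    also have "\<dots> = 0" using tB_mem[OF T(2)] sA_props(2)[OF T(1)] by blast
    finally show "w \<in> y" using tB_mem[OF T(4)] by blast
  next
    assume "w \<in> y"
    then have "tB y b w = 0" using tB_mem[OF T(4)] by blast
    then show "(sA a x w + w) + tB y b w \<in> x" using sA_props(2)[OF T(1)] by simp
  qed
  finally show "w \<in> Gamma y a x b x \<longleftrightarrow> w \<in> y" .
qed

lemma torsorU: "is_torsor (U_carrier a b) (\<lambda>x y z. Gamma x a y b z)"
  unfolding is_torsor_def
proof (intro conjI ballI)
  fix x y z u v assume H: "x \<in> U_carrier a b" "y \<in> U_carrier a b" "z \<in> U_carrier a b"
    "u \<in> U_carrier a b" "v \<in> U_carrier a b"
  show "Gamma x a y b (Gamma z a u b v) = Gamma x a (Gamma u a z b y) b v"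
    by (rule assoc1[OF H])
  show "Gamma x a (Gamma u a z b y) b v = Gamma (Gamma x a y b z) a u b v"
    by (rule assoc2[OF H])
next
  fix x y z assume "x \<in> U_carrier a b" "y \<in> U_carrier a b" "z \<in> U_carrier a b"
  then show "Gamma x a y b z \<in> U_carrier a b" by (rule GammaU)
next
  fix x y assume H: "x \<in> U_carrier a b" "y \<in> U_carrier a b"
  show "Gamma x a x b y = y" by (rule idem1[OF H])
  show "Gamma y a x b x = y" by (rule idem2[OF H])
qed

end

lemma torsor_opp:
  assumes A: "is_torsor S m" shows "is_torsor S (\<lambda>x y z. m z y x)"
  unfolding is_torsor_def
proof (intro conjI ballI)
  fix x y z u v assume "x \<in> S" "y \<in> S" "z \<in> S" "u \<in> S" "v \<in> S"
  then have m3: "m v u (m z y x) = m v (m y z u) x" "m v (m y z u) x = m (m v u z) y x"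
    using A unfolding is_torsor_def by blast+
  then show "m (m v u z) y x = m v (m y z u) x" "m v (m y z u) x = m v u (m z y x)" by simp_all
next
  fix x y z assume "x \<in> S" "y \<in> S" "z \<in> S"
  then show "m z y x \<in> S" using A unfolding is_torsor_def by blast
next
  fix x y assume "x \<in> S" "y \<in> S"
  then show "m y x x = y" "m x x y = y" using A unfolding is_torsor_def by blast+
qed

lemma Gammac_eq: "Gammac x a y b z = Gamma z b y a x"
  unfolding Gammac_def Gamma_def by blast

lemma Uc_eq: "Uc_carrier a b = U_carrier b a"
  unfolding Uc_carrier_def U_carrier_def by blast

theorem theorem7p3:
  fixes a b :: "'a::group_add set"
  assumes "is_subgroup a" and "is_subgroup b"
  shows "(\<forall>x\<in>U_carrier a b. \<forall>y\<in>U_carrier a b. \<forall>z\<in>U_carrier a b.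
            Gamma x a y b z \<in> U_carrier a b)
       \<and> is_torsor (U_carrier a b) (\<lambda>x y z. Gamma x a y b z)
       \<and> (\<forall>x\<in>Uc_carrier a b. \<forall>y\<in>Uc_carrier a b. \<forall>z\<in>Uc_carrier a b.
            Gammac x a y b z \<in> Uc_carrier a b)
       \<and> is_torsor (Uc_carrier a b) (\<lambda>x y z. Gammac x a y b z)
       \<and> Uc_carrier b a = U_carrier a b
       \<and> (\<forall>x\<in>Uc_carrier b a. \<forall>y\<in>Uc_carrier b a. \<forall>z\<in>Uc_carrier b a.
            Gammac x b y a z = Gamma z a y b x)"
proof (intro conjI)
  show "\<forall>x\<in>U_carrier a b. \<forall>y\<in>U_carrier a b. \<forall>z\<in>U_carrier a b. Gamma x a y b z \<in> U_carrier a b"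
    using GammaU[OF assms] by blast
  show "is_torsor (U_carrier a b) (\<lambda>x y z. Gamma x a y b z)" using torsorU[OF assms] .
  show "\<forall>x\<in>Uc_carrier a b. \<forall>y\<in>Uc_carrier a b. \<forall>z\<in>Uc_carrier a b. Gammac x a y b z \<in> Uc_carrier a b"
    unfolding Uc_eq Gammac_eq using GammaU[OF assms(2,1)] by blast
  show "is_torsor (Uc_carrier a b) (\<lambda>x y z. Gammac x a y b z)"
    unfolding Uc_eq Gammac_eq using torsor_opp[OF torsorU[OF assms(2,1)]] .
  show "Uc_carrier b a = U_carrier a b" by (rule Uc_eq)
  show "\<forall>x\<in>Uc_carrier b a. \<forall>y\<in>Uc_carrier b a. \<forall>z\<in>Uc_carrier b a. Gammac x b y a z = Gamma z a y b x"
    by (simp add: Gammac_eq)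
qed

end
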